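(* Let $\Sigma_1,\dots,\Sigma_m$ be disjoint subsets of $\mathbb C$, $\mathcal H=L^2(\Sigma_1\cup\cdots\cup\Sigma_m,\mu)$ for a measure $\mu$; let $\Sigma'_1,\dots,\Sigma'_m$ be disjoint subsets of $\mathbb C$ and $\mathcal H'=L^2(\Sigma'_1\cup\cdots\cup\Sigma'_m,\mu')$ for a measure $\mu'$. Let $A:\mathcal H'\to\mathcal H$ and $B:\mathcal H\to\mathcal H'$ be operators given by kernels such that $A(w,w')=0$ unless there is $i$ with $w\in\Sigma_{2i-1}\cup\Sigma_{2i}$ and $w'\in\Sigma'_{2i-1}\cup\Sigma'_{2i}$, and $B(w',w)=0$ unless there is $i$ with $w'\in\Sigma'_{2i}\cup\Sigma'_{2i+1}$ and $w\in\Sigma_{2i}\cup\Sigma_{2i+1}$. Let $\lambda,\mu$ be complex-valued functions on $\Sigma_1\cup\cdots\cup\Sigma_m$ and $\lambda',\mu'$ complex-valued functions on $\Sigma'_1\cup\cdots\cup\Sigma'_m$ such that $\lambda(w)\mu(w)\lambda'(w')\mu'(w')=1$ for every $(w,w')\in\Sigma_i\times\Sigma'_i$, $1\le i\le m$. Assume $\det(I-AB)$ is well defined and equal to its usual Fredholm series expansion. Then $\det(I-(\lambda A\lambda')(\mu'B\mu))$ is also well defined by the usual Fredholm series expansion and $$\det(I-AB)=\det(I-(\lambda A\lambda')(\mu'B\mu)).$$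
   Context: $\lambda A\lambda'$ denotes the operator with kernel $\lambda(w)A(w,w')\lambda'(w')$, and $\mu'B\mu$ the operator with kernel $\mu'(w')B(w',w)\mu(w)$. *)

theory Defs
  imports "HOL-Analysis.Analysis" "Jordan_Normal_Form.Determinant"
begin

definition blk :: "(nat \<Rightarrow> complex set) \<Rightarrow> nat \<Rightarrow> nat set \<Rightarrow> complex set" where
  "blk S m J = (\<Union>j\<in>J \<inter> {1..m}. S j)"

text \<open>Kernel of the composition AB of integral operators A : L2(M') -> L2(M),
  B : L2(M) -> L2(M') given by kernels A(w,w'), B(w',w).\<close>
definition kcomp :: "complex measure \<Rightarrow> (complex \<Rightarrow> complex \<Rightarrow> complex)
    \<Rightarrow> (complex \<Rightarrow> complex \<Rightarrow> complex) \<Rightarrow> complex \<Rightarrow> complex \<Rightarrow> complex" where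
  "kcomp M' A B = (\<lambda>w v. \<integral>w'. A w w' * B w' v \<partial>M')"

definition fred_integrand :: "(complex \<Rightarrow> complex \<Rightarrow> complex) \<Rightarrow> nat \<Rightarrow> (nat \<Rightarrow> complex) \<Rightarrow> complex" where
  "fred_integrand K n x = Determinant.det (mat n n (\<lambda>(i,j). K (x i) (x j)))"

definition fred_term :: "complex measure \<Rightarrow> (complex \<Rightarrow> complex \<Rightarrow> complex) \<Rightarrow> nat \<Rightarrow> complex" where
  "fred_term M K n = ((-1) ^ n / of_nat (fact n)) *
     (\<integral>x. fred_integrand K n x \<partial>(PiM {..<n} (\<lambda>_. M)))"

definition fred_welldef :: "complex measure \<Rightarrow> (complex \<Rightarrow> complex \<Rightarrow> complex) \<Rightarrow> bool" where
  "fred_welldef M K \<longleftrightarrow>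
     (\<forall>n. integrable (PiM {..<n} (\<lambda>_. M)) (fred_integrand K n)) \<and> summable (fred_term M K)"

definition fred_det :: "complex measure \<Rightarrow> (complex \<Rightarrow> complex \<Rightarrow> complex) \<Rightarrow> complex" where
  "fred_det M K = (\<Sum>n. fred_term M K n)"

end

theory Submission
  imports Defs
begin


lemma card_count_mset:
  assumes "finite I"
  shows "count (image_mset f (mset_set I)) k = card {i\<in>I. f i = k}"
proof -
  have s: "f -` {k} \<inter> set_mset (mset_set I) = {i\<in>I. f i = k}" using assms by auto
  have "count (image_mset f (mset_set I)) k = (\<Sum>y\<in>{i\<in>I. f i = k}. 1)"
    unfolding count_image_mset s using assms by (intro sum.cong) (auto simp: count_mset_set)
  then show ?thesis by simp
qed

lemma prod_count:
  fixes h :: "nat \<Rightarrow> 'b::comm_monoid_mult"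
  assumes "finite I" "\<And>k. card {i\<in>I. f i = k} = card {i\<in>I. g i = k}"
  shows "(\<Prod>i\<in>I. h (f i)) = (\<Prod>i\<in>I. h (g i))"
proof -
  have e: "image_mset f (mset_set I) = image_mset g (mset_set I)"
    by (rule multiset_eqI) (simp add: card_count_mset[OF assms(1)] assms(2))
  have "(\<Prod>i\<in>I. h (f i)) = prod_mset (image_mset h (image_mset f (mset_set I)))"
    by (simp add: prod_unfold_prod_mset image_mset.compositionality comp_def)
  also have "\<dots> = prod_mset (image_mset h (image_mset g (mset_set I)))" by (simp add: e)
  also have "\<dots> = (\<Prod>i\<in>I. h (g i))"
    by (simp add: prod_unfold_prod_mset image_mset.compositionality comp_def)
  finally show ?thesis .
qed

lemma arith_feas:
  fixes a b c k l h :: nat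
  assumes "k \<ge> 1" "a \<in> {2*k-1,2*k}" "b \<in> {2*k-1,2*k}" "b \<in> {2*l,2*l+1}" "c \<in> {2*l,2*l+1}"
  shows "(odd h \<longrightarrow> \<not>(a<h \<and> b\<ge>h) \<and> \<not>(b<h \<and> a\<ge>h)) \<and>
         (even h \<longrightarrow> ((a<h \<and> b\<ge>h) \<longleftrightarrow> (a<h \<and> c\<ge>h)) \<and> ((b<h \<and> a\<ge>h) \<longleftrightarrow> (a\<ge>h \<and> c<h)))"
proof -
  obtain q where q: "h = 2*q \<or> h = 2*q+1" by (metis oddE evenE)
  have bk: "(b = 2*k-1 \<and> 2*k-1 = 2*l+1) \<or> (b = 2*k \<and> 2*k = 2*l)" using assms by auto
  hence "(l = k - 1 \<and> b = 2*k-1) \<or> (l = k \<and> b = 2*k)" using assms(1) by auto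
  then show ?thesis using assms q by (auto; presburger)
qed



lemma comb:
  fixes a b :: "nat \<Rightarrow> nat" and p :: "nat \<Rightarrow> nat"
  assumes p: "p permutes {..<n}"
  and feas: "\<And>i. i<n \<Longrightarrow> \<exists>k l. k\<ge>1 \<and> a i \<in> {2*k-1,2*k} \<and> b i \<in> {2*k-1,2*k} \<and> b i \<in> {2*l,2*l+1} \<and> a (p i) \<in> {2*l,2*l+1}"
  shows "card {i\<in>{..<n}. a i < h} = card {i\<in>{..<n}. b i < h}"
proof -
  define X where "X = {i\<in>{..<n}. a i < h}"
  define Y where "Y = {i\<in>{..<n}. b i < h}"
  have fX: "finite X" and fY: "finite Y" unfolding X_def Y_def by auto
  have cX: "card X = card (X \<inter> Y) + card (X - Y)" by (rule card_Int_Diff[OF fX])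
  have cY: "card Y = card (X \<inter> Y) + card (Y - X)" using card_Int_Diff[OF fY, of X] by (simp add: Int_commute)
  have ar: "(odd h \<longrightarrow> \<not>(a i<h \<and> b i\<ge>h) \<and> \<not>(b i<h \<and> a i\<ge>h)) \<and>
         (even h \<longrightarrow> ((a i<h \<and> b i\<ge>h) \<longleftrightarrow> (a i<h \<and> a (p i)\<ge>h)) \<and> ((b i<h \<and> a i\<ge>h) \<longleftrightarrow> (a i\<ge>h \<and> a (p i)<h)))"
    if il: "i < n" for i
  proof -
    obtain k l where "k\<ge>1" "a i \<in> {2*k-1,2*k}" "b i \<in> {2*k-1,2*k}" "b i \<in> {2*l,2*l+1}" "a (p i) \<in> {2*l,2*l+1}"
      using feas[OF il] by blast
    then show ?thesis by (rule arith_feas)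
  qed
  have "card (X - Y) = card (Y - X)"
  proof (cases "even h")
    case False
    then have "X - Y = {}" "Y - X = {}" using ar unfolding X_def Y_def by auto (meson leI)+
    then show ?thesis by simp
  next
    case True
    define U where "U = {i\<in>{..<n}. a i < h \<and> a (p i) \<ge> h}"
    define D where "D = {i\<in>{..<n}. a i \<ge> h \<and> a (p i) < h}"
    define Z where "Z = {i\<in>{..<n}. a i < h \<and> a (p i) < h}"
    have XY1: "i \<in> X - Y \<longleftrightarrow> i \<in> U" for i
      using ar[of i] True unfolding X_def Y_def U_def by (cases "i < n") (auto simp: not_le)
    have XY2: "i \<in> Y - X \<longleftrightarrow> i \<in> D" for i
      using ar[of i] True unfolding X_def Y_def D_def by (cases "i < n") (auto simp: not_le)
    have XY: "X - Y = U" "Y - X = D" using XY1 XY2 by blast+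
    have "X = Z \<union> U" "Z \<inter> U = {}" unfolding X_def Z_def U_def by auto
    then have c1: "card X = card Z + card U" by (simp add: card_Un_disjoint Z_def U_def)
    define P where "P = {i\<in>{..<n}. a (p i) < h}"
    have "P = Z \<union> D" "Z \<inter> D = {}" unfolding P_def Z_def D_def by auto
    then have c2: "card P = card Z + card D" by (simp add: card_Un_disjoint Z_def D_def)
    have "p ` P = X"
    proof
      show "p ` P \<subseteq> X" unfolding P_def X_def using permutes_in_image[OF p] by auto
      show "X \<subseteq> p ` P"
      proof
        fix j assume j: "j \<in> X"
        have "inv_into UNIV p j \<in> P" "p (inv_into UNIV p j) = j"
          using j permutes_inverses[OF p] permutes_in_image[OF permutes_inv[OF p]]
          unfolding P_def X_def by auto
        then show "j \<in> p ` P" by (metis image_eqI)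
      qed
    qed
    moreover have "inj_on p P" using permutes_inj[OF p] by (simp add: inj_on_def inj_def)
    ultimately have "card P = card X" by (metis card_image)
    then show ?thesis using c1 c2 XY by simp
  qed
  then show ?thesis using cX cY X_def Y_def by simp
qed


lemma count_from_below:
  fixes a b :: "nat \<Rightarrow> nat"
  assumes "\<And>h. card {i\<in>{..<n}. a i < h} = card {i\<in>{..<n}. b i < h}"
  shows "card {i\<in>{..<n}. a i = k} = card {i\<in>{..<n}. b i = k}"
proof -
  have d: "card {i\<in>{..<n}. f i < Suc k} = card {i\<in>{..<n}. f i < k} + card {i\<in>{..<n}. f i = k}"
    for f :: "nat \<Rightarrow> nat"
  proof -
    have "{i\<in>{..<n}. f i < Suc k} = {i\<in>{..<n}. f i < k} \<union> {i\<in>{..<n}. f i = k}" by auto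
    moreover have "{i\<in>{..<n}. f i < k} \<inter> {i\<in>{..<n}. f i = k} = {}" by auto
    ultimately show ?thesis by (simp add: card_Un_disjoint)
  qed
  show ?thesis using d[of a] d[of b] assms[of k] assms[of "Suc k"] by simp
qed

lemma uniq_mid:
  fixes a b b' c k l k' l' :: nat
  assumes "k \<ge> 1" "a \<in> {2*k-1,2*k}" "b \<in> {2*k-1,2*k}" "b \<in> {2*l,2*l+1}" "c \<in> {2*l,2*l+1}"
    "k' \<ge> 1" "a \<in> {2*k'-1,2*k'}" "b' \<in> {2*k'-1,2*k'}" "b' \<in> {2*l',2*l'+1}" "c \<in> {2*l',2*l'+1}"
  shows "b = b'"
proof -
  have "k = k'" using assms(1,2,6,7) by (auto; presburger)
  moreover have "l = l'" using assms(5,10) by (auto; presburger)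
  ultimately show ?thesis using assms(3,4,8,9) by (auto; presburger)
qed

theorem lemma5p6:
  fixes m :: nat
    and S S' :: "nat \<Rightarrow> complex set"
    and M M' :: "complex measure"
    and A :: "complex \<Rightarrow> complex \<Rightarrow> complex"
    and B :: "complex \<Rightarrow> complex \<Rightarrow> complex"
    and lam mu lam' mu' :: "complex \<Rightarrow> complex"
  assumes disj: "disjoint_family_on S {1..m}"
    and disj': "disjoint_family_on S' {1..m}"
    and spM: "space M = (\<Union>i\<in>{1..m}. S i)"
    and spM': "space M' = (\<Union>i\<in>{1..m}. S' i)"
    and A_supp: "\<And>w w'. w \<in> space M \<Longrightarrow> w' \<in> space M' \<Longrightarrow> A w w' \<noteq> 0 \<Longrightarrow>
        (\<exists>i\<ge>1. w \<in> blk S m {2*i-1, 2*i} \<and> w' \<in> blk S' m {2*i-1, 2*i})"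
    and B_supp: "\<And>w w'. w \<in> space M \<Longrightarrow> w' \<in> space M' \<Longrightarrow> B w' w \<noteq> 0 \<Longrightarrow>
        (\<exists>i\<ge>1. w' \<in> blk S' m {2*i, 2*i+1} \<and> w \<in> blk S m {2*i, 2*i+1})"
    and prod1: "\<And>i w w'. i \<in> {1..m} \<Longrightarrow> w \<in> S i \<Longrightarrow> w' \<in> S' i \<Longrightarrow>
        lam w * mu w * lam' w' * mu' w' = 1"
    and wd: "fred_welldef M (kcomp M' A B)"
  shows "fred_welldef M (kcomp M' (\<lambda>w w'. lam w * A w w' * lam' w') (\<lambda>w' w. mu' w' * B w' w * mu w))
    \<and> fred_det M (kcomp M' A B)
        = fred_det M (kcomp M' (\<lambda>w w'. lam w * A w w' * lam' w') (\<lambda>w' w. mu' w' * B w' w * mu w))"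
proof -
  define K where "K = kcomp M' A B"
  define K' where "K' = kcomp M' (\<lambda>w w'. lam w * A w w' * lam' w') (\<lambda>w' w. mu' w' * B w' w * mu w)"
  have Kd: "K w v = (\<integral>w'. A w w' * B w' v \<partial>M')" for w v unfolding K_def kcomp_def by simp
  have K'd: "K' w v = (\<integral>w'. lam w * A w w' * lam' w' * (mu' w' * B w' v * mu v) \<partial>M')" for w v
    unfolding K'_def kcomp_def by simp
  define idx where "idx w = (THE j. j \<in> {1..m} \<and> w \<in> S j)" for w
  define idx' where "idx' w = (THE j. j \<in> {1..m} \<and> w \<in> S' j)" for w
  have idx_uniq: "idx w = j" if "j \<in> {1..m}" "w \<in> S j" for w j
  proof -
    have "\<forall>j'. j' \<in> {1..m} \<and> w \<in> S j' \<longrightarrow> j' = j" using disj that unfolding disjoint_family_on_def by blast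
    then show ?thesis unfolding idx_def using that by (intro the_equality) auto
  qed
  have idx'_uniq: "idx' w = j" if "j \<in> {1..m}" "w \<in> S' j" for w j
  proof -
    have "\<forall>j'. j' \<in> {1..m} \<and> w \<in> S' j' \<longrightarrow> j' = j" using disj' that unfolding disjoint_family_on_def by blast
    then show ?thesis unfolding idx'_def using that by (intro the_equality) auto
  qed
  have idx: "idx w \<in> {1..m} \<and> w \<in> S (idx w)" if wM: "w \<in> space M" for w
  proof -
    obtain j where "j\<in>{1..m}" "w \<in> S j" using wM spM by auto
    then show ?thesis using idx_uniq by auto
  qed
  have idx': "idx' w \<in> {1..m} \<and> w \<in> S' (idx' w)" if wM: "w \<in> space M'" for w
  proof -
    obtain j where "j\<in>{1..m}" "w \<in> S' j" using wM spM' by auto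
    then show ?thesis using idx'_uniq by auto
  qed
  have blk: "w \<in> blk S m J \<longleftrightarrow> idx w \<in> J" if "w \<in> space M" for w J
  proof
    assume "w \<in> blk S m J"
    then obtain j where "j \<in> J" "j \<in> {1..m}" "w \<in> S j" unfolding blk_def by auto
    then show "idx w \<in> J" using idx_uniq by auto
  next
    assume "idx w \<in> J" then show "w \<in> blk S m J" using idx[OF that] unfolding blk_def by auto
  qed
  have blk': "w \<in> blk S' m J \<longleftrightarrow> idx' w \<in> J" if "w \<in> space M'" for w J
  proof
    assume "w \<in> blk S' m J"
    then obtain j where "j \<in> J" "j \<in> {1..m}" "w \<in> S' j" unfolding blk_def by auto
    then show "idx' w \<in> J" using idx'_uniq by auto
  next
    assume "idx' w \<in> J" then show "w \<in> blk S' m J" using idx'[OF that] unfolding blk_def by auto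
  qed
  have feas: "\<exists>k l. k\<ge>1 \<and> idx w \<in> {2*k-1,2*k} \<and> idx' w' \<in> {2*k-1,2*k} \<and> idx' w' \<in> {2*l,2*l+1} \<and> idx v \<in> {2*l,2*l+1}"
    if fw: "w \<in> space M" "v \<in> space M" "w' \<in> space M'" "A w w' \<noteq> 0" "B w' v \<noteq> 0" for w v w'
  proof -
    obtain k where k: "k\<ge>1" "w \<in> blk S m {2*k-1,2*k}" "w' \<in> blk S' m {2*k-1,2*k}"
      using A_supp[OF fw(1,3,4)] by blast
    obtain l where l: "w' \<in> blk S' m {2*l,2*l+1}" "v \<in> blk S m {2*l,2*l+1}"
      using B_supp[OF fw(2,3,5)] by blast
    have "idx w \<in> {2*k-1,2*k}" using k(2) by (simp only: blk[OF fw(1)])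
    moreover have "idx' w' \<in> {2*k-1,2*k}" using k(3) by (simp only: blk'[OF fw(3)])
    moreover have "idx' w' \<in> {2*l,2*l+1}" using l(1) by (simp only: blk'[OF fw(3)])
    moreover have "idx v \<in> {2*l,2*l+1}" using l(2) by (simp only: blk[OF fw(2)])
    ultimately show ?thesis using k(1) by (intro exI[of _ k] exI[of _ l] conjI)
  qed
  have uniqb: "idx' w1 = idx' w2" if u: "w \<in> space M" "v \<in> space M" "w1 \<in> space M'" "A w w1 \<noteq> 0" "B w1 v \<noteq> 0"
     "w2 \<in> space M'" "A w w2 \<noteq> 0" "B w2 v \<noteq> 0" for w v w1 w2
  proof -
    obtain k l where "k\<ge>1" "idx w \<in> {2*k-1,2*k}" "idx' w1 \<in> {2*k-1,2*k}" "idx' w1 \<in> {2*l,2*l+1}" "idx v \<in> {2*l,2*l+1}"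
      using feas[OF u(1,2,3,4,5)] by blast
    moreover obtain k' l' where "k'\<ge>1" "idx w \<in> {2*k'-1,2*k'}" "idx' w2 \<in> {2*k'-1,2*k'}" "idx' w2 \<in> {2*l',2*l'+1}" "idx v \<in> {2*l',2*l'+1}"
      using feas[OF u(1,2,6,7,8)] by blast
    ultimately show ?thesis by (rule uniq_mid)
  qed
  have zero: "K w v = 0 \<and> K' w v = 0" if nz: "\<not>(\<exists>w'\<in>space M'. A w w' \<noteq> 0 \<and> B w' v \<noteq> 0)" for w v
  proof -
    have "K w v = (\<integral>w'. 0 \<partial>M')" unfolding Kd using nz by (intro Bochner_Integration.integral_cong) auto
    moreover have "K' w v = (\<integral>w'. 0 \<partial>M')" unfolding K'd using nz by (intro Bochner_Integration.integral_cong) auto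
    ultimately show ?thesis by simp
  qed
  define T where "T j = lam' (SOME s. s \<in> S' j) * mu' (SOME s. s \<in> S' j)" for j
  have Tconst: "lam' w' * mu' w' = T j" if tc: "j \<in> {1..m}" "y \<in> S j" "w' \<in> S' j" for j y w'
  proof -
    have s: "(SOME s. s \<in> S' j) \<in> S' j" using tc(3) by (rule someI)
    have 1: "(lam y * mu y) * (lam' w' * mu' w') = 1" using prod1[OF tc] by (simp add: mult.assoc)
    have 2: "(lam y * mu y) * T j = 1" using prod1[OF tc(1,2) s] unfolding T_def by (simp add: mult.assoc)
    from 1 2 show ?thesis by (metis mult_left_cancel mult_zero_left zero_neq_one)
  qed
  have diagT: "lam y * mu y * T j = 1" if dt: "j \<in> {1..m}" "y \<in> S j" "w' \<in> S' j" for j y w'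
    using prod1[OF dt] Tconst[OF dt] by (simp add: mult.assoc)
  have entry: "K' w v = lam w * mu v * T (idx' w0) * K w v"
    if en: "w \<in> space M" "v \<in> space M" "w0 \<in> space M'" "A w w0 \<noteq> 0" "B w0 v \<noteq> 0" "y \<in> S (idx' w0)" for w v w0 y
  proof -
    have "K' w v = (\<integral>w'. (lam w * mu v * T (idx' w0)) * (A w w' * B w' v) \<partial>M')"
      unfolding K'd
    proof (intro Bochner_Integration.integral_cong refl)
      fix w' assume w': "w' \<in> space M'"
      show "lam w * A w w' * lam' w' * (mu' w' * B w' v * mu v) = lam w * mu v * T (idx' w0) * (A w w' * B w' v)"
      proof (cases "A w w' \<noteq> 0 \<and> B w' v \<noteq> 0")
        case True
        then have "idx' w' = idx' w0" using uniqb[OF en(1,2) w' _ _ en(3,4,5)] by blast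
        then have eq: "lam' w' * mu' w' = T (idx' w0)" using Tconst[of "idx' w0" y w'] idx'[OF w'] en(6) by metis
        have "lam w * A w w' * lam' w' * (mu' w' * B w' v * mu v) = lam w * mu v * (lam' w' * mu' w') * (A w w' * B w' v)"
          by (simp add: ac_simps)
        then show ?thesis using eq by simp
      next
        case False then show ?thesis by auto
      qed
    qed
    also have "\<dots> = lam w * mu v * T (idx' w0) * K w v" unfolding Kd by (rule integral_mult_right_zero)
    finally show ?thesis .
  qed
  have detexp: "fred_integrand Q n x = (\<Sum>p\<in>{p. p permutes {0..<n}}. signof p * (\<Prod>i=0..<n. Q (x i) (x (p i))))"
    for Q n x
    unfolding fred_integrand_def Determinant.det_def
    by (auto intro!: sum.cong prod.cong simp: permutes_in_image)
  have fi: "fred_integrand K' n x = fred_integrand K n x" if xs: "\<forall>i<n. x i \<in> space M" for n x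
  proof -
    have pe: "(\<Prod>i=0..<n. K' (x i) (x (p i))) = (\<Prod>i=0..<n. K (x i) (x (p i)))" if p: "p permutes {0..<n}" for p
    proof (cases "\<forall>i<n. \<exists>w'\<in>space M'. A (x i) w' \<noteq> 0 \<and> B w' (x (p i)) \<noteq> 0")
      case False
      then obtain i where i: "i<n" "\<not>(\<exists>w'\<in>space M'. A (x i) w' \<noteq> 0 \<and> B w' (x (p i)) \<noteq> 0)" by blast
      have z: "K' (x i) (x (p i)) = 0" "K (x i) (x (p i)) = 0" using zero[OF i(2)] by auto
      have iin: "i \<in> {0..<n}" using i(1) by simp
      have "(\<Prod>i=0..<n. K' (x i) (x (p i))) = 0"
        by (rule prod_zero[of "{0..<n}" "\<lambda>i. K' (x i) (x (p i))"]) (use iin z in auto)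
      moreover have "(\<Prod>i=0..<n. K (x i) (x (p i))) = 0"
        by (rule prod_zero[of "{0..<n}" "\<lambda>i. K (x i) (x (p i))"]) (use iin z in auto)
      ultimately show ?thesis by (rule trans[OF _ sym])
    next
      case True
      then have "\<forall>i. \<exists>w'. i<n \<longrightarrow> w' \<in> space M' \<and> A (x i) w' \<noteq> 0 \<and> B w' (x (p i)) \<noteq> 0" by blast
      then obtain W where W: "\<And>i. i<n \<Longrightarrow> W i \<in> space M' \<and> A (x i) (W i) \<noteq> 0 \<and> B (W i) (x (p i)) \<noteq> 0"
        by metis
      define a where "a i = idx (x i)" for i
      define b where "b i = idx' (W i)" for i
      have pi: "p i < n" if "i<n" for i using permutes_in_image[OF p] that by auto
      have xpi: "x (p i) \<in> space M" if "i<n" for i using xs pi that by auto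
      have fe: "\<exists>k l. k\<ge>1 \<and> a i \<in> {2*k-1,2*k} \<and> b i \<in> {2*k-1,2*k} \<and> b i \<in> {2*l,2*l+1} \<and> a (p i) \<in> {2*l,2*l+1}"
        if "i<n" for i
        unfolding a_def b_def using feas[of "x i" "x (p i)" "W i"] xs xpi W that by blast
      have p': "p permutes {..<n}" using p by (simp add: lessThan_atLeast0)
      have cnt: "card {i\<in>{..<n}. a i = k} = card {i\<in>{..<n}. b i = k}" for k
        by (rule count_from_below) (rule comb[of p n a b, OF p' fe])
      have ex_a: "\<exists>j<n. a j = b i" if "i<n" for i
      proof -
        have "card {j\<in>{..<n}. b j = b i} > 0" using that by (auto simp: card_gt_0_iff)
        then have "card {j\<in>{..<n}. a j = b i} > 0" using cnt by simp
        then show ?thesis by (auto simp: card_gt_0_iff)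
      qed
      have ex_b: "\<exists>j<n. b j = a i" if "i<n" for i
      proof -
        have "card {j\<in>{..<n}. a j = a i} > 0" using that by (auto simp: card_gt_0_iff)
        then have "card {j\<in>{..<n}. b j = a i} > 0" using cnt by simp
        then show ?thesis by (auto simp: card_gt_0_iff)
      qed
      have e1: "K' (x i) (x (p i)) = lam (x i) * mu (x (p i)) * T (b i) * K (x i) (x (p i))" if il: "i<n" for i
      proof -
        obtain j where j: "j<n" "a j = b i" using ex_a[OF il] by blast
        have "x j \<in> S (idx' (W i))" using idx[of "x j"] xs j unfolding a_def b_def by auto
        then show ?thesis unfolding b_def using entry[of "x i" "x (p i)" "W i" "x j"] xs xpi W il by auto
      qed
      have e2: "lam (x i) * mu (x i) * T (a i) = 1" if il: "i<n" for i
      proof -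
        obtain j where j: "j<n" "b j = a i" using ex_b[OF il] by blast
        have "W j \<in> S' (a i)" using idx'[of "W j"] W j unfolding b_def by auto
        moreover have "a i \<in> {1..m}" "x i \<in> S (a i)" using idx[of "x i"] xs il unfolding a_def by auto
        ultimately show ?thesis using diagT by blast
      qed
      have "(\<Prod>i=0..<n. K' (x i) (x (p i))) =
          (\<Prod>i=0..<n. lam (x i)) * (\<Prod>i=0..<n. mu (x (p i))) * (\<Prod>i=0..<n. T (b i)) * (\<Prod>i=0..<n. K (x i) (x (p i)))"
        using e1 by (simp add: prod.distrib)
      also have "(\<Prod>i=0..<n. mu (x (p i))) = (\<Prod>i=0..<n. mu (x i))"
        using prod.permute[OF p, of "\<lambda>i. mu (x i)"] by (simp add: comp_def)
      also have "(\<Prod>i=0..<n. T (b i)) = (\<Prod>i=0..<n. T (a i))"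
        using prod_count[of "{..<n}" b a T] cnt by (simp add: lessThan_atLeast0)
      also have "(\<Prod>i=0..<n. lam (x i)) * (\<Prod>i=0..<n. mu (x i)) * (\<Prod>i=0..<n. T (a i)) = 1"
        using e2 by (simp add: prod.distrib[symmetric])
      finally show ?thesis by simp
    qed
    show ?thesis unfolding detexp using pe by simp
  qed
  have sp: "\<forall>i<n. x i \<in> space M" if "x \<in> space (PiM {..<n} (\<lambda>_. M))" for n x
    using that by (auto simp: space_PiM PiE_iff)
  have ieq: "integrable (PiM {..<n} (\<lambda>_. M)) (fred_integrand K' n) \<longleftrightarrow> integrable (PiM {..<n} (\<lambda>_. M)) (fred_integrand K n)" for n
    by (rule Bochner_Integration.integrable_cong[OF refl]) (rule fi[OF sp])
  have teq: "fred_term M K' n = fred_term M K n" for n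
  proof -
    have "(\<integral>x. fred_integrand K' n x \<partial>(PiM {..<n} (\<lambda>_. M))) = (\<integral>x. fred_integrand K n x \<partial>(PiM {..<n} (\<lambda>_. M)))"
      by (rule Bochner_Integration.integral_cong[OF refl]) (rule fi[OF sp])
    then show ?thesis unfolding fred_term_def by simp
  qed
  have tf: "fred_term M K' = fred_term M K" by (rule ext) (rule teq)
  have wdK: "fred_welldef M K" using wd unfolding K_def .
  have "fred_welldef M K'" using wdK ieq tf unfolding fred_welldef_def by simp
  moreover have "fred_det M K = fred_det M K'" unfolding fred_det_def using tf by simp
  ultimately show ?thesis unfolding K_def K'_def by simp
qed

end
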